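(* Let $n\ge4$ and let $W_n$ be the wheel graph on $n$ vertices with Laplacian matrix \[L=\left[\begin{array}{c|c} n-1 & -\mathbf{1}^T \\ \hline -\mathbf{1} & B \end{array}\right],\] where $B$ is the circulant matrix $\mathrm{circ}(3,-1,0,\ldots,0,-1)$ of order $n-1$. Then the Moore–Penrose inverse of $L$ is \[L^+=\frac{1}{n^2}\left[\begin{array}{c|c} n-1 & -\mathbf{1}^T \\ \hline -\mathbf{1} & -J_{n-1}-nX \end{array}\right],\] where, with $C=\mathrm{circ}(1,0,\ldots,0,-1)$ of order $n-1$, $X=(CC^T+I_{n-1})^{-1}\left[J_{n-1}-nI_{n-1}\right]=\mathrm{circ}(b_0,b_1,\ldots,b_{n-2})$ with, for $j=0,\ldots,n-2$, \[b_j=1+\frac{n2^{n-1-j}}{\sqrt{5}}\left[\frac{(3+\sqrt{5})^j}{2^{n-1}-(3+\sqrt{5})^{n-1}}-\frac{(3-\sqrt{5})^j}{2^{n-1}-(3-\sqrt{5})^{n-1}}\right].\]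
   Context: The wheel graph $W_n$ ($n\ge4$) is a cycle on $n-1$ vertices together with a hub vertex adjacent to every cycle vertex; in the displayed form the hub is listed first and the cycle vertices follow in cyclic order. The Laplacian is $L=D-A$, where $A$ is the adjacency matrix and $D$ the diagonal degree matrix. For $c_0,\dots,c_{k-1}$, $\mathrm{circ}(c_0,\ldots,c_{k-1})$ denotes the $k\times k$ circulant matrix whose $(i,j)$-entry is $c_{(j-i)\bmod k}$. $\mathbf 1$ is the all-ones column vector of length $n-1$, $J_{n-1}$ the $(n-1)\times(n-1)$ all-ones matrix, $I_{n-1}$ the identity. The Moore–Penrose inverse $A^+$ of a real matrix $A$ is the unique matrix with $AA^+A=A$, $A^+AA^+=A^+$, $(AA^+)^T=AA^+$, $(A^+A)^T=A^+A$. *)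

theory Defs
  imports "Jordan_Normal_Form.Matrix"
begin

text \<open>Wheel graph W_n on vertices 0..n-1: vertex 0 is the hub, vertices 1..n-1 form a
  cycle in this cyclic order.\<close>
definition wheel_adj :: "nat \<Rightarrow> nat \<Rightarrow> nat \<Rightarrow> bool" where
  "wheel_adj n i j \<longleftrightarrow>
     (i = 0 \<and> j \<noteq> 0) \<or> (i \<noteq> 0 \<and> j = 0) \<or>
     (i \<noteq> 0 \<and> j \<noteq> 0 \<and>
        ((int i - int j) mod int (n - 1) = 1 \<or> (int j - int i) mod int (n - 1) = 1))"

definition adjacency_mat :: "nat \<Rightarrow> (nat \<Rightarrow> nat \<Rightarrow> bool) \<Rightarrow> real mat" where
  "adjacency_mat n E = mat n n (\<lambda>(i, j). if E i j then 1 else 0)"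

definition degree_mat :: "nat \<Rightarrow> (nat \<Rightarrow> nat \<Rightarrow> bool) \<Rightarrow> real mat" where
  "degree_mat n E = mat n n (\<lambda>(i, j). if i = j then real (card {k. k < n \<and> E i k}) else 0)"

definition laplacian_mat :: "nat \<Rightarrow> (nat \<Rightarrow> nat \<Rightarrow> bool) \<Rightarrow> real mat" where
  "laplacian_mat n E = degree_mat n E - adjacency_mat n E"

definition circ :: "nat \<Rightarrow> (nat \<Rightarrow> real) \<Rightarrow> real mat" where
  "circ k c = mat k k (\<lambda>(i, j). c (nat ((int j - int i) mod int k)))"

definition all_ones_mat :: "nat \<Rightarrow> nat \<Rightarrow> real mat" where
  "all_ones_mat r s = mat r s (\<lambda>_. 1)"

definition mat_inv :: "real mat \<Rightarrow> real mat" where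
  "mat_inv A = (THE B. B \<in> carrier_mat (dim_row A) (dim_row A) \<and>
                       A * B = 1\<^sub>m (dim_row A) \<and> B * A = 1\<^sub>m (dim_row A))"

definition is_moore_penrose :: "real mat \<Rightarrow> real mat \<Rightarrow> bool" where
  "is_moore_penrose A G \<longleftrightarrow> G \<in> carrier_mat (dim_col A) (dim_row A) \<and>
     A * G * A = A \<and> G * A * G = G \<and>
     transpose_mat (A * G) = A * G \<and> transpose_mat (G * A) = G * A"

definition moore_penrose :: "real mat \<Rightarrow> real mat" where
  "moore_penrose A = (THE G. is_moore_penrose A G)"

end

theory Submission
  imports Defs "Jordan_Normal_Form.Determinant"
begin


definition nx :: "nat \<Rightarrow> nat \<Rightarrow> nat" where "nx m i = (if i = m - 1 then 0 else i + 1)"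
definition pv :: "nat \<Rightarrow> nat \<Rightarrow> nat" where "pv m i = (if i = 0 then m - 1 else i - 1)"
definition K :: "nat \<Rightarrow> nat \<Rightarrow> real \<Rightarrow> real mat" where "K a b x = mat a b (\<lambda>_. x)"

lemma circ_idx:
  assumes "i < m" "l < m"
  shows "circ m c $$ (i,l) = c (if i \<le> l then l - i else l + m - i)"
proof -
  have "nat ((int l - int i) mod int m) = (if i \<le> l then l - i else l + m - i)"
  proof (cases "i \<le> l")
    case True
    then show ?thesis using assms by (simp add: of_nat_diff[symmetric] mod_pos_pos_trivial del: of_nat_diff)
  next
    case False
    have "(int l - int i) mod int m = (int l - int i + int m) mod int m" by simp
    also have "\<dots> = int l - int i + int m" using assms False by (intro mod_pos_pos_trivial) auto
    finally show ?thesis using False assms by simp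
  qed
  then show ?thesis using assms unfolding circ_def by simp
qed

lemma Bchar:
  assumes "3 \<le> m" "i < m" "l < m"
  shows "circ m (\<lambda>j. if j = 0 then 3 else if j = 1 \<or> j = m - 1 then -1 else 0) $$ (i,l)
     = (if l = i then 3 else if l = nx m i \<or> l = pv m i then -1 else 0)"
  using assms by (simp add: circ_idx nx_def pv_def) arith

lemma Cchar:
  assumes "3 \<le> m" "i < m" "l < m"
  shows "circ m (\<lambda>j. if j = 0 then 1 else if j = m - 1 then -1 else 0) $$ (i,l)
     = (if l = i then 1 else if l = pv m i then -1 else 0)"
  using assms by (simp add: circ_idx nx_def pv_def) arith

lemma sum3:
  assumes "3 \<le> m" "i < m"
  shows "(\<Sum>l<m. (if l = i then 3 else if l = nx m i \<or> l = pv m i then -1 else 0) * (g l::real))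
     = 3 * g i - g (nx m i) - g (pv m i)"
proof -
  have d: "i \<noteq> nx m i" "i \<noteq> pv m i" "nx m i \<noteq> pv m i" using assms by (auto simp: nx_def pv_def)
  have s: "{i, nx m i, pv m i} \<subseteq> {..<m}" using assms by (auto simp: nx_def pv_def)
  have "(\<Sum>l<m. (if l = i then 3 else if l = nx m i \<or> l = pv m i then -1 else 0) * (g l::real))
    = (\<Sum>l\<in>{i, nx m i, pv m i}. (if l = i then 3 else if l = nx m i \<or> l = pv m i then -1 else 0) * (g l::real))"
    by (rule sum.mono_neutral_right[OF _ s]) auto
  also have "\<dots> = 3 * g i - g (nx m i) - g (pv m i)" using d by simp
  finally show ?thesis .
qed

lemma sum2:
  assumes "3 \<le> m" "i < m"
  shows "(\<Sum>l<m. (if l = i then 1 else if l = pv m i then -1 else 0) * (g l::real))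
     = g i - g (pv m i)"
proof -
  have d: "i \<noteq> pv m i" using assms by (auto simp: nx_def pv_def)
  have s: "{i, pv m i} \<subseteq> {..<m}" using assms by (auto simp: nx_def pv_def)
  have "(\<Sum>l<m. (if l = i then 1 else if l = pv m i then -1 else 0) * (g l::real))
    = (\<Sum>l\<in>{i, pv m i}. (if l = i then 1 else if l = pv m i then -1 else 0) * (g l::real))"
    by (rule sum.mono_neutral_right[OF _ s]) auto
  also have "\<dots> = g i - g (pv m i)" using d by simp
  finally show ?thesis .
qed

lemma mult_entry:
  assumes "i < dim_row A" "k < dim_col B" "dim_row B = dim_col A"
  shows "(A * B) $$ (i,k) = (\<Sum>l<dim_col A. A $$ (i,l) * B $$ (l,k))"
  using assms by (simp add: scalar_prod_def lessThan_atLeast0)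

lemma alg:
  fixes p q s :: real
  assumes pq: "p * q = 1" "p + q = 3" "p - q = s" "s \<noteq> 0" "1 - p^m \<noteq> 0" "1 - q^m \<noteq> 0"
  and f_def: "f = (\<lambda>j. -(1/s) * (p^j/(1-p^m) - q^j/(1-q^m)))"
  shows "3 * f (j+1) - f j - f (j+2) = 0"
    and "m = k + 1 \<Longrightarrow> 3 * f 0 - f k - f 1 = 1"
    and "m = k + 2 \<Longrightarrow> 3 * f (k+1) - f k - f 0 = 0"
proof -
  have qq: "q = 3 - p" using pq by simp
  have p2: "p^2 = 3*p - 1" using pq(1) unfolding qq by (simp add: power2_eq_square algebra_simps)
  have pp: "p = 3 - q" using pq by simp
  have q2: "q^2 = 3*q - 1" using pq(1) unfolding pp by (simp add: power2_eq_square algebra_simps)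
  define A where "A = 1/(1-p^m)"
  define Bq where "Bq = 1/(1-q^m)"
  have A1: "A * (1 - p^m) = 1" unfolding A_def using pq by simp
  have B1: "Bq * (1 - q^m) = 1" unfolding Bq_def using pq by simp
  have fe: "f i = -(1/s) * (p^i * A - q^i * Bq)" for i unfolding f_def A_def Bq_def by simp
  show "3 * f (j+1) - f j - f (j+2) = 0"
  proof -
    have "3 * f (j+1) - f j - f (j+2) = -(1/s) * (A * p^j * (3*p - 1 - p^2) - Bq * q^j*(3*q - 1 - q^2))"
      unfolding fe by (simp add: power_add power2_eq_square algebra_simps)
    then show ?thesis by (simp add: p2 q2)
  qed
  show "m = k + 1 \<Longrightarrow> 3 * f 0 - f k - f 1 = 1"
  proof -
    assume mk: "m = k + 1"
    have a: "3 - p - p^k = q * (1 - p^m)"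
    proof -
      have "q * p^m = (p * q) * p^k" unfolding mk by (simp add: algebra_simps)
      then have "q * p^m = p^k" using pq(1) by simp
      then show ?thesis using pq(2) by (simp add: algebra_simps)
    qed
    have b: "3 - q - q^k = p * (1 - q^m)"
    proof -
      have "p * q^m = (p * q) * q^k" unfolding mk by (simp add: algebra_simps)
      then have "p * q^m = q^k" using pq(1) by simp
      then show ?thesis using pq(2) by (simp add: algebra_simps)
    qed
    have "3 * f 0 - f k - f 1 = -(1/s) * (A * (3 - p - p^k) - Bq * (3 - q - q^k))"
      unfolding fe using pq(4) by (simp add: field_simps)
    also have "\<dots> = -(1/s) * (q * (A * (1 - p^m)) - p * (Bq * (1 - q^m)))" unfolding a b by (simp add: algebra_simps)
    also have "\<dots> = 1" unfolding A1 B1 using pq by (simp add: field_simps)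
    finally show ?thesis .
  qed
  show "m = k + 2 \<Longrightarrow> 3 * f (k+1) - f k - f 0 = 0"
  proof -
    assume mk: "m = k + 2"
    have a: "3 * p^(k+1) - p^k - 1 = -(1 - p^m)"
    proof -
      have "3 * p^(k+1) - p^k - 1 = p^k * (3*p - 1) - 1" by (simp add: algebra_simps)
      also have "\<dots> = p^k * p^2 - 1" using p2 by simp
      also have "\<dots> = -(1 - p^m)" unfolding mk by (simp add: power_add power2_eq_square)
      finally show ?thesis .
    qed
    have b: "3 * q^(k+1) - q^k - 1 = -(1 - q^m)"
    proof -
      have "3 * q^(k+1) - q^k - 1 = q^k * (3*q - 1) - 1" by (simp add: algebra_simps)
      also have "\<dots> = q^k * q^2 - 1" using q2 by simp
      also have "\<dots> = -(1 - q^m)" unfolding mk by (simp add: power_add power2_eq_square)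
      finally show ?thesis .
    qed
    have "3 * f (k+1) - f k - f 0 = -(1/s) * (A * (3 * p^(k+1) - p^k - 1) - Bq * (3 * q^(k+1) - q^k - 1))"
      unfolding fe using pq(4) by (simp add: field_simps)
    also have "\<dots> = -(1/s) * (- (A * (1 - p^m)) + Bq * (1 - q^m))" unfolding a b by (simp add: algebra_simps)
    also have "\<dots> = 0" unfolding A1 B1 by simp
    finally show ?thesis .
  qed
qed



definition dd :: "nat \<Rightarrow> nat \<Rightarrow> real" where
  "dd m j = -(2^(m-j)/sqrt 5) * ((3+sqrt 5)^j/(2^m-(3+sqrt 5)^m) - (3-sqrt 5)^j/(2^m-(3-sqrt 5)^m))"

definition E :: "nat \<Rightarrow> int \<Rightarrow> real" where "E m t = dd m (nat (t mod int m))"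

lemma sqrt5: "sqrt 5 * sqrt 5 = (5::real)" "1 < sqrt (5::real)" "sqrt (5::real) < 3"
proof -
  show "sqrt 5 * sqrt 5 = (5::real)" by simp
  show "1 < sqrt (5::real)" by simp
  have "sqrt (5::real) < sqrt 9" by (simp only: real_sqrt_less_iff)
  moreover have "sqrt 9 = (3::real)" using real_sqrt_abs[of 3] by simp
  ultimately show "sqrt (5::real) < 3" by simp
qed

lemma gen: "1 < x \<Longrightarrow> x < 3 \<Longrightarrow> 1 < (3+x)/2 \<and> 0 < (3-x)/2 \<and> (3-x)/2 < (1::real)" by (auto simp: field_simps)

lemma pq_facts:
  fixes m :: nat
  assumes "m \<ge> 1"
  defines "s \<equiv> sqrt 5" and "p \<equiv> (3 + sqrt 5)/2" and "q \<equiv> (3 - sqrt 5)/2"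
  shows "p * q = 1" "p + q = 3" "p - q = s" "s \<noteq> 0" "1 - p^m \<noteq> 0" "1 - q^m \<noteq> 0"
    and "\<And>j. j \<le> m \<Longrightarrow> dd m j = -(1/s) * (p^j/(1-p^m) - q^j/(1-q^m))"
proof -
  note s5 = sqrt5
  show "p * q = 1" unfolding p_def q_def using s5(1) by (simp add: field_simps)
  show "p + q = 3" unfolding p_def q_def by (simp add: field_simps)
  show "p - q = s" unfolding p_def q_def s_def by (simp add: field_simps)
  show "s \<noteq> 0" unfolding s_def by simp
  have p1: "1 < p" unfolding p_def using gen[OF s5(2,3)] by blast
  have q0: "0 < q" "q < 1" unfolding q_def using gen[OF s5(2,3)] by blast+
  have pm: "1 < p^m" using p1 assms by (simp add: one_less_power)
  then show p1': "1 - p^m \<noteq> 0" by simp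
  have "q^m < 1" using q0 assms power_Suc_less_one[of q "m - 1"] by simp
  then show q1': "1 - q^m \<noteq> 0" by simp
  fix j assume j: "j \<le> m"
  have e3: "(2::real)^m = 2^(m-j)*2^j" using j by (simp add: power_add[symmetric])
  have key: "2^(m-j) * (2 * r)^j / (2^m - (2 * r)^m) = r^j/(1-r^m)" if "1 - r^m \<noteq> 0" for r :: real
  proof -
    have "2^(m-j) * (2 * r)^j / (2^m - (2 * r)^m) = (2^m * r^j) / (2^m * (1 - r^m))"
      unfolding power_mult_distrib e3 by (simp add: algebra_simps)
    also have "\<dots> = r^j/(1-r^m)" by simp
    finally show ?thesis .
  qed
  have a: "3 + sqrt 5 = 2 * p" "3 - sqrt 5 = 2 * q" unfolding p_def q_def by simp_all
  show "dd m j = -(1/s) * (p^j/(1-p^m) - q^j/(1-q^m))"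
    unfolding dd_def a using key[OF p1'] key[OF q1'] unfolding s_def
    by (simp add: field_simps)
qed

lemma mod_pm:
  fixes t :: int and m :: nat
  assumes "m \<ge> 2"
  shows "nat ((t-1) mod int m) = (if nat (t mod int m) = 0 then m-1 else nat (t mod int m) - 1)"
    and "nat ((t+1) mod int m) = (if nat (t mod int m) = m - 1 then 0 else nat (t mod int m) + 1)"
proof -
  define r where "r = t mod int m"
  have r: "0 \<le> r" "r < int m" unfolding r_def using assms by simp_all
  have "(t-1) mod int m = (r - 1) mod int m" unfolding r_def by (simp add: mod_diff_left_eq)
  also have "\<dots> = (if r = 0 then int m - 1 else r - 1)"
  proof (cases "r = 0")
    case True
    have "(-1) mod int m = (int m - 1) mod int m" by (metis add.commute diff_add_cancel mod_add_self2 uminus_add_conv_diff)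
    also have "\<dots> = int m - 1" using assms by (intro mod_pos_pos_trivial) auto
    finally show ?thesis using True by simp
  next
    case False then show ?thesis using r by (simp add: mod_pos_pos_trivial)
  qed
  finally show "nat ((t-1) mod int m) = (if nat (t mod int m) = 0 then m-1 else nat (t mod int m) - 1)"
    using r unfolding r_def[symmetric] by auto
  have "(t+1) mod int m = (r + 1) mod int m" unfolding r_def by (simp add: mod_add_left_eq)
  also have "\<dots> = (if r = int m - 1 then 0 else r + 1)"
  proof (cases "r = int m - 1")
    case True then show ?thesis by simp
  next
    case False then show ?thesis using r by (simp add: mod_pos_pos_trivial)
  qed
  finally show "nat ((t+1) mod int m) = (if nat (t mod int m) = m - 1 then 0 else nat (t mod int m) + 1)"
    using r unfolding r_def[symmetric] by auto
qed

lemma Erec: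
  assumes m: "m \<ge> 3"
  shows "3 * E m t - E m (t-1) - E m (t+1) = (if t mod int m = 0 then 1 else 0)"
proof -
  define j where "j = nat (t mod int m)"
  have j: "j < m" unfolding j_def using m by (simp add: nat_less_iff)
  have tj: "(t mod int m = 0) = (j = 0)" unfolding j_def proof -
    have "0 \<le> t mod int m" using m by simp
    then show "(t mod int m = 0) = (nat (t mod int m) = 0)" by auto
  qed
  define s p q where "s = sqrt (5::real)" and "p = (3 + sqrt 5)/(2::real)" and "q = (3 - sqrt (5::real))/2"
  define f where "f = (\<lambda>j. -(1/s) * (p^j/(1-p^m) - q^j/(1-q^m)))"
  note pqf = pq_facts[of m, folded s_def p_def q_def]
  have m1: "m \<ge> 1" using m by simp
  have df: "dd m i = f i" if "i \<le> m" for i using pqf(7)[OF m1 that] unfolding f_def by simp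
  note al = alg[OF pqf(1-6)[OF m1] f_def]
  have e: "E m t = dd m j" "E m (t-1) = dd m (if j = 0 then m-1 else j-1)"
     "E m (t+1) = dd m (if j = m - 1 then 0 else j+1)"
    unfolding E_def j_def using mod_pm[of m t] m by auto
  show ?thesis
  proof (cases "j = 0")
    case True
    have "3 * f 0 - f (m-1) - f 1 = 1" by (rule al(2)) (use m in simp)
    then show ?thesis unfolding e tj using True m df by simp
  next
    case False
    show ?thesis
    proof (cases "j = m - 1")
      case True
      have "3 * f ((m-2)+1) - f (m-2) - f 0 = 0" by (rule al(3)) (use m in simp)
      moreover have "(m-2)+1 = j" "m - 2 = j - 1" using True m by auto
      ultimately show ?thesis unfolding e tj using True False m df by simp
    next
      case False2: False
      obtain i where i: "j = i + 1" using False by (cases j) auto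
      have "3 * f (i+1) - f i - f (i+2) = 0" using al(1) by simp
      then show ?thesis unfolding e tj using False False2 i j df by simp
    qed
  qed
qed

definition cBf :: "nat \<Rightarrow> nat \<Rightarrow> real" where
  "cBf m j = (if j = 0 then 3 else if j = 1 \<or> j = m - 1 then -1 else 0)"
definition cCf :: "nat \<Rightarrow> nat \<Rightarrow> real" where
  "cCf m j = (if j = 0 then 1 else if j = m - 1 then -1 else 0)"

lemma Bc: "3 \<le> m \<Longrightarrow> i < m \<Longrightarrow> l < m \<Longrightarrow> circ m (cBf m) $$ (i,l)
     = (if l = i then 3 else if l = nx m i \<or> l = pv m i then -1 else 0)"
  using Bchar unfolding cBf_def by blast

lemma Cc: "3 \<le> m \<Longrightarrow> i < m \<Longrightarrow> l < m \<Longrightarrow> circ m (cCf m) $$ (i,l)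
     = (if l = i then 1 else if l = pv m i then -1 else 0)"
  using Cchar unfolding cCf_def by blast

lemma nxpv: "3 \<le> m \<Longrightarrow> i < m \<Longrightarrow> l < m \<Longrightarrow> (l = nx m i) = (i = pv m l)"
  by (auto simp: nx_def pv_def)
lemma pv_inj: "3 \<le> m \<Longrightarrow> i < m \<Longrightarrow> l < m \<Longrightarrow> (pv m i = pv m l) = (i = l)"
  by (auto simp: pv_def)
lemma pv_ne: "3 \<le> m \<Longrightarrow> i < m \<Longrightarrow> pv m i \<noteq> i \<and> pv m (pv m i) \<noteq> i \<and> nx m i \<noteq> pv m i \<and> pv m i < m \<and> nx m i < m"
  by (auto simp: pv_def nx_def)

lemma Bc_col: assumes m: "3 \<le> m" and k: "k < m" and l: "l < m"
  shows "circ m (cBf m) $$ (l,k) = (if l = k then 3 else if l = nx m k \<or> l = pv m k then -1 else 0)"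
proof -
  have "circ m (cBf m) $$ (l,k) = (if k = l then 3 else if k = nx m l \<or> k = pv m l then -1 else 0)"
    by (rule Bc[OF m l k])
  also have "(k = nx m l) = (l = pv m k)" by (rule nxpv[OF m l k])
  also have "(k = pv m l) = (l = nx m k)" using nxpv[OF m k l] by auto
  finally show ?thesis by auto
qed

lemma D_E: "i < m \<Longrightarrow> k < m \<Longrightarrow> circ m (dd m) $$ (i,k) = E m (int k - int i)"
  unfolding circ_def E_def by simp

lemma E_per: "E m (t + int m) = E m t" "E m (t - int m) = E m t"
  unfolding E_def by simp_all

lemma BD: assumes m: "3 \<le> m" shows "circ m (cBf m) * circ m (dd m) = 1\<^sub>m m"
proof (rule eq_matI)
  fix i k assume i: "i < dim_row (1\<^sub>m m)" and k: "k < dim_col (1\<^sub>m m)"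
  then have i: "i < m" and k: "k < m" by auto
  have "(circ m (cBf m) * circ m (dd m)) $$ (i,k) = (\<Sum>l<m. circ m (cBf m) $$ (i,l) * circ m (dd m) $$ (l,k))"
    using i k by (subst mult_entry) (auto simp: circ_def)
  also have "\<dots> = (\<Sum>l<m. (if l = i then 3 else if l = nx m i \<or> l = pv m i then -1 else 0) * E m (int k - int l))"
    using i k m by (intro sum.cong) (auto simp: Bc D_E)
  also have "\<dots> = 3 * E m (int k - int i) - E m (int k - int (nx m i)) - E m (int k - int (pv m i))"
    by (rule sum3[OF m i])
  also have "E m (int k - int (nx m i)) = E m ((int k - int i) - 1)"
  proof (cases "i = m - 1")
    case True
    then have "int k - int (nx m i) = ((int k - int i) - 1) + int m" using m by (simp add: nx_def)
    then show ?thesis by (simp only: E_per)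
  qed (simp add: nx_def algebra_simps)
  also have "E m (int k - int (pv m i)) = E m ((int k - int i) + 1)"
  proof (cases "i = 0")
    case True
    then have "int k - int (pv m i) = ((int k - int i) + 1) - int m" using m by (simp add: pv_def)
    then show ?thesis by (simp only: E_per)
  next
    case False then show ?thesis by (simp add: pv_def algebra_simps of_nat_diff)
  qed
  also have "3 * E m (int k - int i) - E m ((int k - int i) - 1) - E m ((int k - int i) + 1)
     = (if (int k - int i) mod int m = 0 then 1 else 0)" by (rule Erec[OF m])
  also have "\<dots> = 1\<^sub>m m $$ (i,k)"
  proof -
    have "((int k - int i) mod int m = 0) = (i = k)"
    proof
      assume "(int k - int i) mod int m = 0"
      then have "int m dvd (int k - int i)" by auto
      then obtain c where c: "int k - int i = int m * c" by (auto elim: dvdE)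
      have "c = 0"
      proof (rule ccontr)
        assume "c \<noteq> 0"
        then have "1 \<le> \<bar>c\<bar>" by linarith
        then have "int m * 1 \<le> int m * \<bar>c\<bar>" by (intro mult_left_mono) auto
        then have "\<bar>int m * c\<bar> \<ge> int m" by (simp add: abs_mult)
        then show False using c i k by linarith
      qed
      then show "i = k" using c by simp
    qed simp
    then show ?thesis using i k by simp
  qed
  finally show "(circ m (cBf m) * circ m (dd m)) $$ (i,k) = 1\<^sub>m m $$ (i,k)" .
qed (auto simp: circ_def)

lemma circ_carrier: "circ m c \<in> carrier_mat m m" unfolding circ_def by simp

lemma DB: assumes m: "3 \<le> m" shows "circ m (dd m) * circ m (cBf m) = 1\<^sub>m m"
  by (rule mat_mult_left_right_inverse[OF circ_carrier circ_carrier BD[OF m]])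

lemma mat_inv_B: assumes m: "3 \<le> m" shows "mat_inv (circ m (cBf m)) = circ m (dd m)"
  unfolding mat_inv_def
proof (rule the_equality)
  show "circ m (dd m) \<in> carrier_mat (dim_row (circ m (cBf m))) (dim_row (circ m (cBf m))) \<and>
    circ m (cBf m) * circ m (dd m) = 1\<^sub>m (dim_row (circ m (cBf m))) \<and>
    circ m (dd m) * circ m (cBf m) = 1\<^sub>m (dim_row (circ m (cBf m)))"
    using BD[OF m] DB[OF m] by (simp add: circ_def)
next
  fix X assume X: "X \<in> carrier_mat (dim_row (circ m (cBf m))) (dim_row (circ m (cBf m))) \<and>
    circ m (cBf m) * X = 1\<^sub>m (dim_row (circ m (cBf m))) \<and>
    X * circ m (cBf m) = 1\<^sub>m (dim_row (circ m (cBf m)))"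
  then have Xc: "X \<in> carrier_mat m m" and XB: "X * circ m (cBf m) = 1\<^sub>m m" by (auto simp: circ_def)
  have "X = X * (circ m (cBf m) * circ m (dd m))" using BD[OF m] Xc by simp
  also have "\<dots> = (X * circ m (cBf m)) * circ m (dd m)"
    using assoc_mult_mat[OF Xc circ_carrier circ_carrier] by simp
  also have "\<dots> = circ m (dd m)" using XB left_mult_one_mat[OF circ_carrier] by simp
  finally show "X = circ m (dd m)" .
qed

lemma CCt: assumes m: "3 \<le> m"
  shows "circ m (cCf m) * transpose_mat (circ m (cCf m)) + 1\<^sub>m m = circ m (cBf m)"
proof (rule eq_matI)
  fix i k assume "i < dim_row (circ m (cBf m))" "k < dim_col (circ m (cBf m))"
  then have i: "i < m" and k: "k < m" by (auto simp: circ_def)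
  have "(circ m (cCf m) * transpose_mat (circ m (cCf m))) $$ (i,k)
     = (\<Sum>l<m. circ m (cCf m) $$ (i,l) * circ m (cCf m) $$ (k,l))"
    using i k by (subst mult_entry) (auto simp: circ_def)
  also have "\<dots> = (\<Sum>l<m. (if l = i then 1 else if l = pv m i then -1 else 0) * circ m (cCf m) $$ (k,l))"
    using i k m by (intro sum.cong) (auto simp: Cc)
  also have "\<dots> = circ m (cCf m) $$ (k,i) - circ m (cCf m) $$ (k, pv m i)"
    by (rule sum2[OF m i])
  finally have e: "(circ m (cCf m) * transpose_mat (circ m (cCf m))) $$ (i,k) = circ m (cCf m) $$ (k,i) - circ m (cCf m) $$ (k, pv m i)" .
  have pvi: "pv m i < m" using i m by (auto simp: pv_def)
  show "(circ m (cCf m) * transpose_mat (circ m (cCf m)) + 1\<^sub>m m) $$ (i,k) = circ m (cBf m) $$ (i,k)"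
  proof -
    note pn = pv_ne[OF m i] pv_ne[OF m k]
    have lhs: "(circ m (cCf m) * transpose_mat (circ m (cCf m)) + 1\<^sub>m m) $$ (i,k)
      = (if i = k then 1 else if i = pv m k then -1 else 0) - (if pv m i = k then 1 else if pv m i = pv m k then -1 else 0)
        + (if i = k then 1 else 0)"
      using i k e pvi m by (simp add: Cc circ_carrier)
    have nk: "(k = nx m i) = (i = pv m k)" by (rule nxpv[OF m i k])
    have pk: "(pv m i = pv m k) = (i = k)" by (rule pv_inj[OF m i k])
    show ?thesis unfolding lhs Bc[OF m i k] nk pk using pn by auto
  qed
qed (auto simp: circ_def)

lemma B_K: assumes m: "3 \<le> m" shows "circ m (cBf m) * K m c y = K m c y"
proof (rule eq_matI)
  fix i k assume "i < dim_row (K m c y)" "k < dim_col (K m c y)"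
  then have i: "i < m" and k: "k < c" by (auto simp: K_def)
  have "(circ m (cBf m) * K m c y) $$ (i,k) = (\<Sum>l<m. circ m (cBf m) $$ (i,l) * y)"
    using i k by (subst mult_entry) (auto simp: circ_def K_def)
  also have "\<dots> = (\<Sum>l<m. (if l = i then 3 else if l = nx m i \<or> l = pv m i then -1 else 0) * (\<lambda>_. y) l)"
    using i m by (intro sum.cong) (auto simp: Bc)
  also have "\<dots> = y" by (subst sum3[OF m i]) simp
  finally show "(circ m (cBf m) * K m c y) $$ (i,k) = K m c y $$ (i,k)" using i k by (simp add: K_def)
qed (auto simp: circ_def K_def)

lemma K_B: assumes m: "3 \<le> m" shows "K r m y * circ m (cBf m) = K r m y"
proof (rule eq_matI)
  fix i k assume "i < dim_row (K r m y)" "k < dim_col (K r m y)"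
  then have i: "i < r" and k: "k < m" by (auto simp: K_def)
  have "(K r m y * circ m (cBf m)) $$ (i,k) = (\<Sum>l<m. y * circ m (cBf m) $$ (l,k))"
    using i k by (subst mult_entry) (auto simp: circ_def K_def)
  also have "\<dots> = (\<Sum>l<m. (if l = k then 3 else if l = nx m k \<or> l = pv m k then -1 else 0) * (\<lambda>_. y) l)"
    using k m by (intro sum.cong refl) (simp add: Bc_col)
  also have "\<dots> = y" by (subst sum3[OF m k]) simp
  finally show "(K r m y * circ m (cBf m)) $$ (i,k) = K r m y $$ (i,k)" using i k by (simp add: K_def)
qed (auto simp: circ_def K_def)



lemma mp_unique:
  fixes A G1 G2 :: "real mat"
  assumes A: "A \<in> carrier_mat n n" and h1: "is_moore_penrose A G1" and h2: "is_moore_penrose A G2"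
  shows "G1 = G2"
proof -
  have G1: "G1 \<in> carrier_mat n n" and G2: "G2 \<in> carrier_mat n n" using h1 h2 A unfolding is_moore_penrose_def by auto
  have a1: "A * G1 * A = A" "G1 * A * G1 = G1" "transpose_mat (A * G1) = A * G1" "transpose_mat (G1 * A) = G1 * A"
    using h1 unfolding is_moore_penrose_def by auto
  have a2: "A * G2 * A = A" "G2 * A * G2 = G2" "transpose_mat (A * G2) = A * G2" "transpose_mat (G2 * A) = G2 * A"
    using h2 unfolding is_moore_penrose_def by auto
  have mc: "\<And>X Y. X \<in> carrier_mat n n \<Longrightarrow> Y \<in> carrier_mat n n \<Longrightarrow> X * Y \<in> carrier_mat n n" by auto
  have as: "\<And>X Y Z. X \<in> carrier_mat n n \<Longrightarrow> Y \<in> carrier_mat n n \<Longrightarrow> Z \<in> carrier_mat n n \<Longrightarrow> X * Y * Z = X * (Y * Z)"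
    by (rule assoc_mult_mat)
  have At: "transpose_mat A \<in> carrier_mat n n" and G1t: "transpose_mat G1 \<in> carrier_mat n n" and G2t: "transpose_mat G2 \<in> carrier_mat n n"
    using A G1 G2 by auto
  have tA1: "transpose_mat A = transpose_mat A * (A * G2)"
  proof -
    have "transpose_mat A = transpose_mat ((A * G2) * A)" using a2 by simp
    also have "\<dots> = transpose_mat A * transpose_mat (A * G2)" by (rule transpose_mult[OF mult_carrier_mat[OF A G2] A])
    finally show ?thesis using a2 by simp
  qed
  have tA2: "transpose_mat A = (G1 * A) * transpose_mat A"
  proof -
    have "transpose_mat A = transpose_mat (A * (G1 * A))" using a1 A G1 by simp
    also have "\<dots> = transpose_mat (G1 * A) * transpose_mat A" by (rule transpose_mult[OF A mult_carrier_mat[OF G1 A]])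
    finally show ?thesis using a1 by simp
  qed
  have AG1: "A * G1 = transpose_mat G1 * transpose_mat A" using a1(3) A G1 transpose_mult[OF A G1] by simp
  have G2A: "G2 * A = transpose_mat A * transpose_mat G2" using a2(4) A G2 transpose_mult[OF G2 A] by simp
  have e1: "G1 = G1 * A * G2"
  proof -
    have "G1 = G1 * (A * G1)" using a1 A G1 by simp
    also have "\<dots> = G1 * (transpose_mat G1 * (transpose_mat A * (A * G2)))" using AG1 tA1 A G1 by simp
    also have "\<dots> = G1 * ((transpose_mat G1 * transpose_mat A) * (A * G2))" using assoc_mult_mat[OF G1t At mult_carrier_mat[OF A G2]] by simp
    also have "\<dots> = G1 * ((A * G1) * (A * G2))" using AG1 by simp
    also have "\<dots> = (G1 * A * G1) * A * G2" by (simp add: as mc A G1 G2)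
    finally show ?thesis using a1 by simp
  qed
  have e2: "G2 = G1 * A * G2"
  proof -
    have "G2 = (G2 * A) * G2" using a2 A G2 by simp
    also have "\<dots> = (((G1 * A) * transpose_mat A) * transpose_mat G2) * G2" using G2A tA2 A G1 by simp
    also have "\<dots> = (G1 * A) * (transpose_mat A * transpose_mat G2) * G2" using assoc_mult_mat[OF mult_carrier_mat[OF G1 A] At G2t] by simp
    also have "\<dots> = (G1 * A) * (G2 * A) * G2" using G2A by simp
    also have "\<dots> = G1 * A * (G2 * A * G2)" by (simp add: as mc A G1 G2)
    finally show ?thesis using a2 by simp
  qed
  show ?thesis using e1 e2 by simp
qed

lemma modidx:
  assumes "a < m" "c < m"
  shows "nat ((int c - int a) mod int m) = (if a \<le> c then c - a else c + m - a)"
proof (cases "a \<le> c")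
  case True
  then show ?thesis using assms by (simp add: of_nat_diff[symmetric] mod_pos_pos_trivial del: of_nat_diff)
next
  case False
  have "(int c - int a) mod int m = (int c - int a + int m) mod int m" by simp
  also have "\<dots> = int c - int a + int m" using assms False by (intro mod_pos_pos_trivial) auto
  finally show ?thesis using False assms by simp
qed

lemma mod1: assumes "a < m" "c < m" "2 \<le> m"
  shows "((int c - int a) mod int m = 1) = ((if a \<le> c then c - a else c + m - a) = 1)"
proof -
  have "0 \<le> (int c - int a) mod int m" using assms by simp
  then have "((int c - int a) mod int m = 1) = (nat ((int c - int a) mod int m) = 1)" by linarith
  then show ?thesis using modidx[OF assms(1,2)] by simp
qed

lemma adj_cyc:
  assumes n: "n = Suc m" and m: "3 \<le> m" and i: "1 \<le> i" "i < n" and j: "1 \<le> j" "j < n"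
  shows "wheel_adj n i j = (j - 1 = nx m (i-1) \<or> j - 1 = pv m (i-1))"
proof -
  define a c where "a = i - 1" and "c = j - 1"
  have a: "a < m" and c: "c < m" using i j n unfolding a_def c_def by auto
  have ia: "int i - int j = int a - int c" "int j - int i = int c - int a" unfolding a_def c_def using i j by auto
  have "wheel_adj n i j = ((int a - int c) mod int m = 1 \<or> (int c - int a) mod int m = 1)"
    unfolding wheel_adj_def ia using i j n by simp
  also have "\<dots> = ((if c \<le> a then a - c else a + m - c) = 1 \<or> (if a \<le> c then c - a else c + m - a) = 1)"
    using mod1[OF a c] mod1[OF c a] m by simp
  also have "\<dots> = (c = nx m a \<or> c = pv m a)" using a c m unfolding nx_def pv_def by auto
  finally show ?thesis unfolding a_def c_def .
qed

lemma deg0: "n \<ge> 1 \<Longrightarrow> card {k. k < n \<and> wheel_adj n 0 k} = n - 1"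
proof -
  have "{k. k < n \<and> wheel_adj n 0 k} = {1..<n}" unfolding wheel_adj_def by auto
  then show ?thesis by simp
qed

lemma degi:
  assumes n: "n = Suc m" and m: "3 \<le> m" and i: "1 \<le> i" "i < n"
  shows "card {k. k < n \<and> wheel_adj n i k} = 3"
proof -
  have im: "i - 1 < m" using i n by auto
  have pn: "nx m (i-1) \<noteq> pv m (i-1)" "nx m (i-1) < m" "pv m (i-1) < m" using pv_ne[OF m im] by auto
  have "{k. k < n \<and> wheel_adj n i k} = {0, Suc (nx m (i-1)), Suc (pv m (i-1))}"
  proof (rule Set.set_eqI, rule iffI)
    fix k assume "k \<in> {k. k < n \<and> wheel_adj n i k}"
    then have k: "k < n" "wheel_adj n i k" by auto
    show "k \<in> {0, Suc (nx m (i-1)), Suc (pv m (i-1))}"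
    proof (cases "k = 0")
      case False
      then have "k - 1 = nx m (i-1) \<or> k - 1 = pv m (i-1)" using adj_cyc[OF n m i, of k] k by simp
      then show ?thesis using False by auto
    qed simp
  next
    fix k assume k: "k \<in> {0, Suc (nx m (i-1)), Suc (pv m (i-1))}"
    show "k \<in> {k. k < n \<and> wheel_adj n i k}"
    proof (cases "k = 0")
      case True then show ?thesis using i n unfolding wheel_adj_def by auto
    next
      case False
      then have k1: "1 \<le> k" "k < n" and "k - 1 = nx m (i-1) \<or> k - 1 = pv m (i-1)" using k pn n by auto
      then show ?thesis using adj_cyc[OF n m i k1] by simp
    qed
  qed
  then show ?thesis using pn by simp
qed

lemma Lblock:
  assumes n: "n = Suc m" and m: "3 \<le> m"
  shows "laplacian_mat n (wheel_adj n) = four_block_mat (mat 1 1 (\<lambda>_. real n - 1)) (mat 1 m (\<lambda>_. -1))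
                            (mat m 1 (\<lambda>_. -1)) (circ m (cBf m))"
proof (rule eq_matI)
  fix i j assume "i < dim_row (four_block_mat (mat 1 1 (\<lambda>_. real n - 1)) (mat 1 m (\<lambda>_. -1))
                            (mat m 1 (\<lambda>_. -1)) (circ m (cBf m)))"
     "j < dim_col (four_block_mat (mat 1 1 (\<lambda>_. real n - 1)) (mat 1 m (\<lambda>_. -1))
                            (mat m 1 (\<lambda>_. -1)) (circ m (cBf m)))"
  then have i: "i < n" and j: "j < n" using n by (auto simp: circ_def)
  have L: "laplacian_mat n (wheel_adj n) $$ (i,j) = (if i = j then real (card {k. k < n \<and> wheel_adj n i k}) else 0)
     - (if wheel_adj n i j then 1 else 0)"
    unfolding laplacian_mat_def degree_mat_def adjacency_mat_def using i j by simp
  show "laplacian_mat n (wheel_adj n) $$ (i,j) = four_block_mat (mat 1 1 (\<lambda>_. real n - 1)) (mat 1 m (\<lambda>_. -1))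
                            (mat m 1 (\<lambda>_. -1)) (circ m (cBf m)) $$ (i,j)"
  proof (cases "i = 0")
    case True
    then show ?thesis unfolding L using i j n deg0[of n] by (auto simp: circ_def wheel_adj_def)
  next
    case i0: False
    show ?thesis
    proof (cases "j = 0")
      case True
      then show ?thesis unfolding L using i j n i0 by (auto simp: circ_def wheel_adj_def)
    next
      case j0: False
      have i1: "1 \<le> i" "i < n" and j1: "1 \<le> j" "j < n" using i j i0 j0 by auto
      have ad: "wheel_adj n i j = (j - 1 = nx m (i-1) \<or> j - 1 = pv m (i-1))" by (rule adj_cyc[OF n m i1 j1])
      have B: "circ m (cBf m) $$ (i - 1, j - 1) = (if j - 1 = i - 1 then 3 else if j - 1 = nx m (i-1) \<or> j - 1 = pv m (i-1) then -1 else 0)"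
        using Bc[OF m, of "i-1" "j-1"] i j n i0 j0 by simp
      have ij: "(j - 1 = i - 1) = (i = j)" using i0 j0 by auto
      have im: "i - 1 < m" using i n i0 by auto
      have pn: "nx m (i-1) \<noteq> i - 1" "pv m (i-1) \<noteq> i - 1" using pv_ne[OF m im] m unfolding nx_def by auto
      have FB: "four_block_mat (mat 1 1 (\<lambda>_. real n - 1)) (mat 1 m (\<lambda>_. -1))
                            (mat m 1 (\<lambda>_. -1)) (circ m (cBf m)) $$ (i,j) = circ m (cBf m) $$ (i - 1, j - 1)"
        using i j n i0 j0 by (simp add: circ_def)
      show ?thesis
      proof (cases "i = j")
        case True
        then show ?thesis unfolding L FB B ad ij using degi[OF n m i1] pn by simp
      next
        case False
        then show ?thesis unfolding L FB B ad ij by simp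
      qed
    qed
  qed
qed (auto simp: n laplacian_mat_def degree_mat_def adjacency_mat_def circ_def)



lemma K_carrier[simp]: "K a b x \<in> carrier_mat a b" unfolding K_def by simp
lemma dimK[simp]: "dim_row (K a b x) = a" "dim_col (K a b x) = b" unfolding K_def by simp_all
lemma idxK[simp]: "i < a \<Longrightarrow> j < b \<Longrightarrow> K a b x $$ (i,j) = x" unfolding K_def by simp
lemma dimcirc[simp]: "dim_row (circ m c) = m" "dim_col (circ m c) = m" unfolding circ_def by simp_all

lemma KK: "K a b x * K b c y = K a c (real b * x * y)"
proof (rule eq_matI)
  fix i j assume "i < dim_row (K a c (real b * x * y))" "j < dim_col (K a c (real b * x * y))"
  then have i: "i < a" and j: "j < c" by auto
  show "(K a b x * K b c y) $$ (i, j) = K a c (real b * x * y) $$ (i, j)"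
    using i j by (subst mult_entry) (auto simp: K_def)
qed auto

lemma Kadd: "K a b x + K a b y = K a b (x + y)" by (rule eq_matI) (auto simp: K_def)
lemma Kminus: "K a b x - K a b y = K a b (x - y)" by (rule eq_matI) (auto simp: K_def)

lemma D_K: assumes m: "3 \<le> m" shows "circ m (dd m) * K m c y = K m c y"
proof -
  have "circ m (dd m) * K m c y = circ m (dd m) * (circ m (cBf m) * K m c y)" using B_K[OF m] by simp
  also have "\<dots> = (circ m (dd m) * circ m (cBf m)) * K m c y"
    using assoc_mult_mat[OF circ_carrier circ_carrier K_carrier] by simp
  also have "\<dots> = K m c y" using DB[OF m] by simp
  finally show ?thesis .
qed

lemma K_D: assumes m: "3 \<le> m" shows "K r m y * circ m (dd m) = K r m y"
proof -
  have "K r m y * circ m (dd m) = (K r m y * circ m (cBf m)) * circ m (dd m)" using K_B[OF m] by simp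
  also have "\<dots> = K r m y * (circ m (cBf m) * circ m (dd m))"
    using assoc_mult_mat[OF K_carrier circ_carrier circ_carrier] by simp
  also have "\<dots> = K r m y" using BD[OF m] by simp
  finally show ?thesis .
qed

lemma dist1: "dim_col A = m \<Longrightarrow> A * (circ m (dd m) - K m m c) = A * circ m (dd m) - A * K m m c"
  by (rule mult_minus_distrib_mat[of A "dim_row A" m]) auto
lemma dist2: "dim_row A = m \<Longrightarrow> (circ m (dd m) - K m m c) * A = circ m (dd m) * A - K m m c * A"
proof -
  assume "dim_row A = m"
  then have A: "A \<in> carrier_mat m (dim_col A)" by auto
  show ?thesis by (rule minus_mult_distrib_mat[OF circ_carrier K_carrier A])
qed
lemma dist3: "dim_row A = m \<Longrightarrow> (1\<^sub>m m - K m m c) * A = A - K m m c * A"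
proof -
  assume "dim_row A = m"
  then have A: "A \<in> carrier_mat m (dim_col A)" by auto
  have "(1\<^sub>m m - K m m c) * A = 1\<^sub>m m * A - K m m c * A"
    by (rule minus_mult_distrib_mat[OF one_carrier_mat K_carrier A])
  then show ?thesis using A by simp
qed
lemma B_D_K: "3 \<le> m \<Longrightarrow> circ m (cBf m) * (circ m (dd m) - K m m c) = 1\<^sub>m m - K m m c"
  by (subst mult_minus_distrib_mat[of _ m m]) (auto simp: BD B_K)

lemma blocks:
  assumes m: "3 \<le> m" and n: "n = Suc m"
  defines "nn \<equiv> real n"
  defines "D \<equiv> circ m (dd m)" and "B \<equiv> circ m (cBf m)"
  defines "G \<equiv> four_block_mat (K 1 1 (real m / nn^2)) (K 1 m (-1/nn^2)) (K m 1 (-1/nn^2)) (D - K m m ((nn+1)/nn^2))"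
      and "L \<equiv> four_block_mat (K 1 1 (nn - 1)) (K 1 m (-1)) (K m 1 (-1)) B"
      and "P \<equiv> four_block_mat (K 1 1 (real m / nn)) (K 1 m (-1/nn)) (K m 1 (-1/nn)) (1\<^sub>m m - K m m (1/nn))"
  shows "L * G = P" "G * L = P" "P * L = L" "P * G = G" "transpose_mat P = P"
proof -
  have nn: "real m = nn - 1" "nn \<noteq> 0" unfolding nn_def n by simp_all
  have Dc: "D \<in> carrier_mat m m" and Bc: "B \<in> carrier_mat m m" unfolding D_def B_def by (simp_all add: circ_carrier)
  note simps = KK Kadd Kminus D_K[OF m] K_D[OF m] dist1 dist2 dist3 B_D_K[OF m] BD[OF m] DB[OF m] B_K[OF m] K_B[OF m]
  show "L * G = P" unfolding L_def G_def P_def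
    apply (subst mult_four_block_mat[OF K_carrier K_carrier K_carrier Bc K_carrier K_carrier K_carrier minus_carrier_mat[OF K_carrier]])
    apply (rule cong_four_block_mat)
       apply (simp_all add: simps D_def B_def)
       apply (rule eq_matI; auto simp: nn power2_eq_square field_simps algebra_simps)+
    done
  show "G * L = P" unfolding L_def G_def P_def
    apply (subst mult_four_block_mat[OF K_carrier K_carrier K_carrier minus_carrier_mat[OF K_carrier] K_carrier K_carrier K_carrier Bc])
    apply (rule cong_four_block_mat)
       apply (simp_all add: simps D_def B_def)
       apply (rule eq_matI; auto simp: nn power2_eq_square field_simps algebra_simps)+
    done
  show "P * L = L" unfolding L_def P_def
    apply (subst mult_four_block_mat[OF K_carrier K_carrier K_carrier minus_carrier_mat[OF K_carrier] K_carrier K_carrier K_carrier Bc])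
    apply (rule cong_four_block_mat)
       apply (simp_all add: simps D_def B_def)
       apply (rule eq_matI; auto simp: nn power2_eq_square field_simps algebra_simps)+
    done
  show "P * G = G" unfolding G_def P_def
    apply (subst mult_four_block_mat[OF K_carrier K_carrier K_carrier minus_carrier_mat[OF K_carrier] K_carrier K_carrier K_carrier minus_carrier_mat[OF K_carrier]])
    apply (rule cong_four_block_mat)
       apply (simp_all add: simps D_def B_def)
       apply (rule eq_matI; auto simp: nn power2_eq_square field_simps algebra_simps)+
    done
  show "transpose_mat P = P" unfolding P_def
    by (rule eq_matI) (auto simp: K_def)
qed

theorem mainTheorem10:
  fixes n :: nat
  assumes "n \<ge> 4"
  defines "L \<equiv> laplacian_mat n (wheel_adj n)"
      and "B \<equiv> circ (n - 1) (\<lambda>j. if j = 0 then 3 else if j = 1 \<or> j = n - 2 then -1 else 0)"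
      and "C \<equiv> circ (n - 1) (\<lambda>j. if j = 0 then 1 else if j = n - 2 then -1 else 0)"
      and "b \<equiv> (\<lambda>j::nat. 1 + real n * 2 ^ (n - 1 - j) / sqrt 5 *
                 ((3 + sqrt 5) ^ j / (2 ^ (n - 1) - (3 + sqrt 5) ^ (n - 1))
                  - (3 - sqrt 5) ^ j / (2 ^ (n - 1) - (3 - sqrt 5) ^ (n - 1))))"
  defines "X \<equiv> mat_inv (C * transpose_mat C + 1\<^sub>m (n - 1))
                 * (all_ones_mat (n - 1) (n - 1) - real n \<cdot>\<^sub>m 1\<^sub>m (n - 1))"
  shows "L = four_block_mat (mat 1 1 (\<lambda>_. real n - 1)) (mat 1 (n - 1) (\<lambda>_. -1))
                            (mat (n - 1) 1 (\<lambda>_. -1)) B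
       \<and> X = circ (n - 1) b
       \<and> moore_penrose L = (1 / (real n)^2) \<cdot>\<^sub>m
           four_block_mat (mat 1 1 (\<lambda>_. real n - 1)) (mat 1 (n - 1) (\<lambda>_. -1))
                          (mat (n - 1) 1 (\<lambda>_. -1))
                          (- all_ones_mat (n - 1) (n - 1) - real n \<cdot>\<^sub>m X)"
proof -
  define m where "m = n - 1"
  have n: "n = Suc m" and m: "3 \<le> m" using assms(1) unfolding m_def by auto
  have n1: "n - 1 = m" "n - 2 = m - 1" using n by auto
  define nn where "nn = real n"
  have nn: "real m = nn - 1" "nn \<noteq> 0" unfolding nn_def n by simp_all
  define D where "D = circ m (dd m)"
  have Bm: "B = circ m (cBf m)" unfolding B_def n1 cBf_def by simp
  have Cm: "C = circ m (cCf m)" unfolding C_def n1 cCf_def by simp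
  have Lb: "L = four_block_mat (K 1 1 (nn - 1)) (K 1 m (-1)) (K m 1 (-1)) (circ m (cBf m))"
    unfolding L_def K_def nn_def by (rule Lblock[OF n m])
  have J: "all_ones_mat m m = K m m 1" unfolding all_ones_mat_def K_def by simp
  have Xe: "X = K m m 1 - nn \<cdot>\<^sub>m D"
  proof -
    have "X = D * (K m m 1 - nn \<cdot>\<^sub>m 1\<^sub>m m)"
      unfolding X_def n1 Cm CCt[OF m] mat_inv_B[OF m] J D_def nn_def by simp
    also have "\<dots> = D * K m m 1 - D * (nn \<cdot>\<^sub>m 1\<^sub>m m)"
      unfolding D_def by (rule mult_minus_distrib_mat[OF circ_carrier K_carrier smult_carrier_mat[OF one_carrier_mat]])
    also have "\<dots> = K m m 1 - nn \<cdot>\<^sub>m D"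
      unfolding D_def using D_K[OF m] mult_smult_distrib[OF circ_carrier one_carrier_mat] by simp
    finally show ?thesis .
  qed
  have bdd: "b j = 1 - nn * dd m j" for j
    unfolding b_def dd_def n1 nn_def by (simp add: algebra_simps)
  have Xc: "X = circ (n - 1) b"
    unfolding Xe n1 D_def
    by (rule eq_matI) (auto simp: circ_def bdd)
  define G where "G = four_block_mat (K 1 1 (real m / nn^2)) (K 1 m (-1/nn^2)) (K m 1 (-1/nn^2)) (D - K m m ((nn+1)/nn^2))"
  define P where "P = four_block_mat (K 1 1 (real m / nn)) (K 1 m (-1/nn)) (K m 1 (-1/nn)) (1\<^sub>m m - K m m (1/nn))"
  note bl = blocks[OF m n, folded nn_def D_def, folded Lb G_def P_def]
  have Lc: "L \<in> carrier_mat n n" unfolding Lb n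
    using four_block_carrier_mat[OF K_carrier[of 1 1 "nn-1"] circ_carrier[of m "cBf m"], of "K 1 m (-1)" "K m 1 (-1)"] by simp
  have mpG: "is_moore_penrose L G"
    unfolding is_moore_penrose_def
  proof (intro conjI)
    show "G \<in> carrier_mat (dim_col L) (dim_row L)" unfolding G_def using Lc n
      using four_block_carrier_mat[OF K_carrier[of 1 1 "real m / nn^2"] minus_carrier_mat[OF K_carrier[of m m "(nn+1)/nn^2"]],
           of "K 1 m (-1/nn^2)" "K m 1 (-1/nn^2)" D] by simp
    show "L * G * L = L" using bl by simp
    show "G * L * G = G" using bl by simp
    show "transpose_mat (L * G) = L * G" using bl by simp
    show "transpose_mat (G * L) = G * L" using bl by simp
  qed
  have mpL: "moore_penrose L = G"
    unfolding moore_penrose_def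
    by (rule the_equality[where P="is_moore_penrose L", OF mpG]) (rule mp_unique[OF Lc _ mpG])
  have Ge: "(1 / (real n)^2) \<cdot>\<^sub>m
           four_block_mat (mat 1 1 (\<lambda>_. real n - 1)) (mat 1 (n - 1) (\<lambda>_. -1))
                          (mat (n - 1) 1 (\<lambda>_. -1))
                          (- all_ones_mat (n - 1) (n - 1) - real n \<cdot>\<^sub>m X) = G"
    unfolding G_def n1 J Xe nn_def[symmetric] K_def[symmetric]
    by (rule eq_matI) (auto simp: D_def circ_def nn field_simps power2_eq_square algebra_simps)
  show ?thesis
    using Lb Xc mpL Ge Bm unfolding n1 nn_def K_def by simp
qed

end
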